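(* Let $m>0$, $n\in\mathbb{R}$, and let $b:\mathbb{R}\to\mathbb{R}$ be periodic with period $m$ and Riemann-integrable on every bounded interval. If $u\in\mathbb{R}$ satisfies $\int_u^{u+m}b(x)\,dx\le n$, then there exists $x_1\in[u,u+m]$ such that for all $x_2\in[x_1,x_1+m]$, $$\int_{x_1}^{x_2}b(x)\,dx\le (x_2-x_1)\cdot\frac{n}{m}.$$ *)

theory Defs
  imports "HOL-Analysis.Analysis"
begin

text \<open>Riemann integrability on a compact interval [a,b]: Riemann sums over tagged
  divisions whose pieces lie within uniform distance delta of their tags converge
  (i.e. the integral exists with respect to constant gauges).\<close>
definition riemann_integrable_on :: "(real \<Rightarrow> real) \<Rightarrow> real \<Rightarrow> real \<Rightarrow> bool" where
  "riemann_integrable_on f a b \<longleftrightarrow>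
     (\<exists>I. \<forall>e>0. \<exists>d>0. \<forall>p. p tagged_division_of {a..b} \<and> (\<lambda>x. ball x d) fine p \<longrightarrow>
        \<bar>(\<Sum>(x,K)\<in>p. Henstock_Kurzweil_Integration.content K * f x) - I\<bar> < e)"

end

theory Submission
  imports Defs
begin

lemma ri_integrable:
  assumes "riemann_integrable_on f s t"
  shows "f integrable_on {s..t}"
proof -
  obtain I where I: "\<forall>e>0. \<exists>d>0. \<forall>p. p tagged_division_of {s..t} \<and> (\<lambda>x. ball x d) fine p \<longrightarrow>
        \<bar>(\<Sum>(x,K)\<in>p. Henstock_Kurzweil_Integration.content K * f x) - I\<bar> < e"
    using assms unfolding riemann_integrable_on_def by blast
  have "(f has_integral I) {s..t}"
    unfolding has_integral_real
  proof (intro allI impI)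
    fix e :: real assume "e > 0"
    then obtain d where d: "d > 0" "\<forall>p. p tagged_division_of {s..t} \<and> (\<lambda>x. ball x d) fine p \<longrightarrow>
        \<bar>(\<Sum>(x,K)\<in>p. Henstock_Kurzweil_Integration.content K * f x) - I\<bar> < e" using I by blast
    show "\<exists>\<gamma>. gauge \<gamma> \<and> (\<forall>\<D>. \<D> tagged_division_of {s..t} \<and> \<gamma> fine \<D> \<longrightarrow>
        norm (sum (\<lambda>(x,k). Henstock_Kurzweil_Integration.content k *\<^sub>R f x) \<D> - I) < e)"
      using d by (intro exI[of _ "\<lambda>x. ball x d"]) (auto simp: gauge_def)
  qed
  then show ?thesis by blast
qed

theorem mainTheorem14:
  fixes b :: "real \<Rightarrow> real" and m n u :: real
  assumes "m > 0"
    and "\<And>x. b (x + m) = b x"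
    and "\<And>s t. s \<le> t \<Longrightarrow> riemann_integrable_on b s t"
    and "integral {u..u+m} b \<le> n"
  shows "\<exists>x1\<in>{u..u+m}. \<forall>x2\<in>{x1..x1+m}. integral {x1..x2} b \<le> (x2 - x1) * (n / m)"
proof -
  have int: "b integrable_on {s..t}" if "s \<le> t" for s t
    using ri_integrable assms(3) that by blast
  define c where "c = n / m"
  have cm: "c * m = n" using assms(1) by (simp add: c_def)
  define F where "F x = integral {u..x} b - c * (x - u)" for x
  have "continuous_on {u..u+m} (\<lambda>x. integral {u..x} b)"
    by (rule indefinite_integral_continuous_1) (use int assms(1) in auto)
  then have "continuous_on {u..u+m} F" unfolding F_def
    by (intro continuous_intros)
  then obtain x1 where x1: "x1 \<in> {u..u+m}" "\<And>y. y \<in> {u..u+m} \<Longrightarrow> F y \<le> F x1"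
    using continuous_attains_sup[of "{u..u+m}" F] assms(1) by auto
  have diff: "integral {x1..z} b = integral {u..z} b - integral {u..x1} b" if "x1 \<le> z" for z
    using Henstock_Kurzweil_Integration.integral_combine[of u x1 z b] int[of u z] x1(1) that by auto
  have shift: "integral {u+m..y+m} b = integral {u..y} b" for y
  proof -
    have "b \<circ> (+) m = b" using assms(2) by (auto simp: fun_eq_iff add.commute)
    then show ?thesis using integral_shift_Icc_real[of u y b m] by simp
  qed
  show ?thesis
  proof (intro bexI[OF _ x1(1)] ballI)
    fix x2 assume x2: "x2 \<in> {x1..x1+m}"
    show "integral {x1..x2} b \<le> (x2 - x1) * (n / m)"
    proof (cases "x2 \<le> u + m")
      case True
      then have "F x2 \<le> F x1" using x1 x2 by auto
      then show ?thesis using diff[of x2] x2 unfolding F_def c_def[symmetric]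
        by (auto simp: algebra_simps)
    next
      case False
      define y where "y = x2 - m"
      have y: "y \<in> {u..u+m}" using x1 x2 False assms(1) by (auto simp: y_def)
      have "integral {u..x2} b = integral {u..u+m} b + integral {u+m..x2} b"
        using Henstock_Kurzweil_Integration.integral_combine[of u "u+m" x2 b] int[of u x2] False assms(1) by auto
      also have "integral {u+m..x2} b = integral {u..y} b"
        using shift[of y] by (simp add: y_def)
      finally have "F x2 \<le> F y" unfolding F_def using assms(4) cm
        by (simp add: y_def algebra_simps)
      also have "\<dots> \<le> F x1" using x1(2) y by blast
      finally show ?thesis using diff[of x2] x2 unfolding F_def c_def[symmetric]
        by (auto simp: algebra_simps)
    qed
  qed
qed

end
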